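(* Let $M$ be an object of an abelian category $\mathcal{A}$. Then: (1) $M$ is strongly self-Rickart if and only if $M$ is self-Rickart and ${\rm End}_{\mathcal{A}}(M)$ is an abelian ring. (2) $M$ is dual strongly self-Rickart if and only if $M$ is dual self-Rickart and ${\rm End}_{\mathcal{A}}(M)$ is an abelian ring.
   Context: A ring is abelian if every idempotent element is central. A morphism $f:X\to Y$ is a section if $f'f=1_X$ for some $f'$, a retraction if $ff'=1_Y$ for some $f'$. A monomorphism $k:K\to M$ is fully invariant if for every $h:M\to M$ there is $\alpha:K\to K$ with $hk=k\alpha$; an epimorphism $c:M\to C$ is fully coinvariant if for every $h:M\to M$ there is $\gamma:C\to C$ with $ch=\gamma c$. $M$ is self-Rickart if the kernel of every endomorphism of $M$ is a section; dual self-Rickart if the cokernel of every endomorphism of $M$ is a retraction; strongly self-Rickart if the kernel of every endomorphism of $M$ is a fully invariant section; dual strongly self-Rickart if the cokernel of every endomorphism of $M$ is a fully coinvariant retraction. *)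

theory Defs
  imports "HOL-Algebra.Ring"
begin

text \<open>A (small-or-large, carrier-based) category with an additive structure on hom-sets.
  cat_comp g f is the composite g after f.\<close>

record ('o, 'm) cat =
  cat_obj  :: "'o set"
  cat_arr  :: "'m set"
  cat_dom  :: "'m \<Rightarrow> 'o"
  cat_cod  :: "'m \<Rightarrow> 'o"
  cat_id   :: "'o \<Rightarrow> 'm"
  cat_comp :: "'m \<Rightarrow> 'm \<Rightarrow> 'm"
  cat_add  :: "'m \<Rightarrow> 'm \<Rightarrow> 'm"
  cat_neg  :: "'m \<Rightarrow> 'm"
  cat_zero :: "'o \<Rightarrow> 'o \<Rightarrow> 'm"

definition hom :: "('o, 'm) cat \<Rightarrow> 'o \<Rightarrow> 'o \<Rightarrow> 'm set" where
  "hom C a b = {f \<in> cat_arr C. cat_dom C f = a \<and> cat_cod C f = b}"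

definition category :: "('o, 'm) cat \<Rightarrow> bool" where
  "category C \<longleftrightarrow>
     (\<forall>f \<in> cat_arr C. cat_dom C f \<in> cat_obj C \<and> cat_cod C f \<in> cat_obj C) \<and>
     (\<forall>a \<in> cat_obj C. cat_id C a \<in> hom C a a) \<and>
     (\<forall>a b c f g. f \<in> hom C a b \<longrightarrow> g \<in> hom C b c \<longrightarrow> cat_comp C g f \<in> hom C a c) \<and>
     (\<forall>a b c d f g h. f \<in> hom C a b \<longrightarrow> g \<in> hom C b c \<longrightarrow> h \<in> hom C c d \<longrightarrow>
        cat_comp C h (cat_comp C g f) = cat_comp C (cat_comp C h g) f) \<and>
     (\<forall>a b f. f \<in> hom C a b \<longrightarrow> cat_comp C f (cat_id C a) = f \<and> cat_comp C (cat_id C b) f = f)"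

definition preadditive :: "('o, 'm) cat \<Rightarrow> bool" where
  "preadditive C \<longleftrightarrow> category C \<and>
     (\<forall>a \<in> cat_obj C. \<forall>b \<in> cat_obj C.
        cat_zero C a b \<in> hom C a b \<and>
        (\<forall>f \<in> hom C a b. \<forall>g \<in> hom C a b. cat_add C f g \<in> hom C a b) \<and>
        (\<forall>f \<in> hom C a b. cat_neg C f \<in> hom C a b) \<and>
        (\<forall>f \<in> hom C a b. \<forall>g \<in> hom C a b. \<forall>h \<in> hom C a b.
            cat_add C (cat_add C f g) h = cat_add C f (cat_add C g h)) \<and>
        (\<forall>f \<in> hom C a b. \<forall>g \<in> hom C a b. cat_add C f g = cat_add C g f) \<and>
        (\<forall>f \<in> hom C a b. cat_add C f (cat_zero C a b) = f) \<and>
        (\<forall>f \<in> hom C a b. cat_add C f (cat_neg C f) = cat_zero C a b)) \<and>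
     (\<forall>a b c f g h. f \<in> hom C a b \<longrightarrow> g \<in> hom C a b \<longrightarrow> h \<in> hom C b c \<longrightarrow>
        cat_comp C h (cat_add C f g) = cat_add C (cat_comp C h f) (cat_comp C h g)) \<and>
     (\<forall>a b c f g h. f \<in> hom C b c \<longrightarrow> g \<in> hom C b c \<longrightarrow> h \<in> hom C a b \<longrightarrow>
        cat_comp C (cat_add C f g) h = cat_add C (cat_comp C f h) (cat_comp C g h))"

definition zero_object :: "('o, 'm) cat \<Rightarrow> 'o \<Rightarrow> bool" where
  "zero_object C z \<longleftrightarrow> z \<in> cat_obj C \<and>
     (\<forall>a \<in> cat_obj C. (\<exists>!f. f \<in> hom C z a) \<and> (\<exists>!f. f \<in> hom C a z))"

definition has_biproducts :: "('o, 'm) cat \<Rightarrow> bool" where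
  "has_biproducts C \<longleftrightarrow>
     (\<forall>a \<in> cat_obj C. \<forall>b \<in> cat_obj C. \<exists>s p1 p2 i1 i2.
        s \<in> cat_obj C \<and> p1 \<in> hom C s a \<and> p2 \<in> hom C s b \<and> i1 \<in> hom C a s \<and> i2 \<in> hom C b s \<and>
        cat_comp C p1 i1 = cat_id C a \<and> cat_comp C p2 i2 = cat_id C b \<and>
        cat_comp C p1 i2 = cat_zero C b a \<and> cat_comp C p2 i1 = cat_zero C a b \<and>
        cat_add C (cat_comp C i1 p1) (cat_comp C i2 p2) = cat_id C s)"

definition additive_category :: "('o, 'm) cat \<Rightarrow> bool" where
  "additive_category C \<longleftrightarrow> preadditive C \<and> (\<exists>z. zero_object C z) \<and> has_biproducts C"

definition mono :: "('o, 'm) cat \<Rightarrow> 'm \<Rightarrow> bool" where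
  "mono C f \<longleftrightarrow> f \<in> cat_arr C \<and>
     (\<forall>x g h. g \<in> hom C x (cat_dom C f) \<longrightarrow> h \<in> hom C x (cat_dom C f) \<longrightarrow>
        cat_comp C f g = cat_comp C f h \<longrightarrow> g = h)"

definition epi :: "('o, 'm) cat \<Rightarrow> 'm \<Rightarrow> bool" where
  "epi C f \<longleftrightarrow> f \<in> cat_arr C \<and>
     (\<forall>x g h. g \<in> hom C (cat_cod C f) x \<longrightarrow> h \<in> hom C (cat_cod C f) x \<longrightarrow>
        cat_comp C g f = cat_comp C h f \<longrightarrow> g = h)"

definition is_kernel :: "('o, 'm) cat \<Rightarrow> 'm \<Rightarrow> 'm \<Rightarrow> bool" where
  "is_kernel C f k \<longleftrightarrow> f \<in> cat_arr C \<and> k \<in> cat_arr C \<and>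
     cat_cod C k = cat_dom C f \<and>
     cat_comp C f k = cat_zero C (cat_dom C k) (cat_cod C f) \<and>
     (\<forall>x g. g \<in> hom C x (cat_dom C f) \<longrightarrow> cat_comp C f g = cat_zero C x (cat_cod C f) \<longrightarrow>
        (\<exists>!u. u \<in> hom C x (cat_dom C k) \<and> cat_comp C k u = g))"

definition is_cokernel :: "('o, 'm) cat \<Rightarrow> 'm \<Rightarrow> 'm \<Rightarrow> bool" where
  "is_cokernel C f c \<longleftrightarrow> f \<in> cat_arr C \<and> c \<in> cat_arr C \<and>
     cat_dom C c = cat_cod C f \<and>
     cat_comp C c f = cat_zero C (cat_dom C f) (cat_cod C c) \<and>
     (\<forall>x g. g \<in> hom C (cat_cod C f) x \<longrightarrow> cat_comp C g f = cat_zero C (cat_dom C f) x \<longrightarrow>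
        (\<exists>!u. u \<in> hom C (cat_cod C c) x \<and> cat_comp C u c = g))"

definition abelian_category :: "('o, 'm) cat \<Rightarrow> bool" where
  "abelian_category C \<longleftrightarrow> additive_category C \<and>
     (\<forall>f \<in> cat_arr C. \<exists>k. is_kernel C f k) \<and>
     (\<forall>f \<in> cat_arr C. \<exists>c. is_cokernel C f c) \<and>
     (\<forall>m. mono C m \<longrightarrow> (\<exists>f. is_kernel C f m)) \<and>
     (\<forall>e. epi C e \<longrightarrow> (\<exists>f. is_cokernel C f e))"

definition "section" :: "('o, 'm) cat \<Rightarrow> 'm \<Rightarrow> bool" where
  "section C f \<longleftrightarrow> f \<in> cat_arr C \<and>
     (\<exists>f'. f' \<in> hom C (cat_cod C f) (cat_dom C f) \<and> cat_comp C f' f = cat_id C (cat_dom C f))"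

definition retraction :: "('o, 'm) cat \<Rightarrow> 'm \<Rightarrow> bool" where
  "retraction C f \<longleftrightarrow> f \<in> cat_arr C \<and>
     (\<exists>f'. f' \<in> hom C (cat_cod C f) (cat_dom C f) \<and> cat_comp C f f' = cat_id C (cat_cod C f))"

definition fully_invariant :: "('o, 'm) cat \<Rightarrow> 'm \<Rightarrow> bool" where
  "fully_invariant C k \<longleftrightarrow> mono C k \<and>
     (\<forall>h \<in> hom C (cat_cod C k) (cat_cod C k).
        \<exists>\<alpha> \<in> hom C (cat_dom C k) (cat_dom C k). cat_comp C h k = cat_comp C k \<alpha>)"

definition fully_coinvariant :: "('o, 'm) cat \<Rightarrow> 'm \<Rightarrow> bool" where
  "fully_coinvariant C c \<longleftrightarrow> epi C c \<and>
     (\<forall>h \<in> hom C (cat_dom C c) (cat_dom C c).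
        \<exists>\<gamma> \<in> hom C (cat_cod C c) (cat_cod C c). cat_comp C c h = cat_comp C \<gamma> c)"

definition self_rickart :: "('o, 'm) cat \<Rightarrow> 'o \<Rightarrow> bool" where
  "self_rickart C M \<longleftrightarrow>
     (\<forall>h \<in> hom C M M. \<forall>k. is_kernel C h k \<longrightarrow> section C k)"

definition dual_self_rickart :: "('o, 'm) cat \<Rightarrow> 'o \<Rightarrow> bool" where
  "dual_self_rickart C M \<longleftrightarrow>
     (\<forall>h \<in> hom C M M. \<forall>c. is_cokernel C h c \<longrightarrow> retraction C c)"

definition strongly_self_rickart :: "('o, 'm) cat \<Rightarrow> 'o \<Rightarrow> bool" where
  "strongly_self_rickart C M \<longleftrightarrow>
     (\<forall>h \<in> hom C M M. \<forall>k. is_kernel C h k \<longrightarrow> fully_invariant C k \<and> section C k)"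

definition dual_strongly_self_rickart :: "('o, 'm) cat \<Rightarrow> 'o \<Rightarrow> bool" where
  "dual_strongly_self_rickart C M \<longleftrightarrow>
     (\<forall>h \<in> hom C M M. \<forall>c. is_cokernel C h c \<longrightarrow> fully_coinvariant C c \<and> retraction C c)"

definition End_ring :: "('o, 'm) cat \<Rightarrow> 'o \<Rightarrow> 'm ring" where
  "End_ring C M = \<lparr>carrier = hom C M M, monoid.mult = cat_comp C, one = cat_id C M,
                    zero = cat_zero C M M, add = cat_add C\<rparr>"

definition abelian_ring :: "('a, 'b) ring_scheme \<Rightarrow> bool" where
  "abelian_ring R \<longleftrightarrow>
     (\<forall>e \<in> carrier R. e \<otimes>\<^bsub>R\<^esub> e = e \<longrightarrow> (\<forall>x \<in> carrier R. e \<otimes>\<^bsub>R\<^esub> x = x \<otimes>\<^bsub>R\<^esub> e))"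

end

theory Submission
  imports Defs
begin

lemma cat_obj_of_hom:
  assumes "category C" "f \<in> hom C a b" shows "a \<in> cat_obj C" "b \<in> cat_obj C"
  using assms unfolding category_def hom_def by auto

lemma cat_comp_hom:
  assumes "category C" "f \<in> hom C a b" "g \<in> hom C b c" shows "cat_comp C g f \<in> hom C a c"
  using assms unfolding category_def by blast

lemma cat_assoc:
  assumes "category C" "f \<in> hom C a b" "g \<in> hom C b c" "h \<in> hom C c d"
  shows "cat_comp C h (cat_comp C g f) = cat_comp C (cat_comp C h g) f"
  using assms unfolding category_def by blast

lemma cat_id_hom:
  assumes "category C" "a \<in> cat_obj C" shows "cat_id C a \<in> hom C a a"
  using assms unfolding category_def by blast

lemma cat_id_l:
  assumes "category C" "f \<in> hom C a b" shows "cat_comp C (cat_id C b) f = f"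
  using assms unfolding category_def by blast

lemma cat_id_r:
  assumes "category C" "f \<in> hom C a b" shows "cat_comp C f (cat_id C a) = f"
  using assms unfolding category_def by blast

lemma hom_arr: "f \<in> hom C a b \<Longrightarrow> f \<in> cat_arr C \<and> cat_dom C f = a \<and> cat_cod C f = b"
  unfolding hom_def by auto

lemma arr_hom: "f \<in> cat_arr C \<Longrightarrow> f \<in> hom C (cat_dom C f) (cat_cod C f)"
  unfolding hom_def by auto

lemma pre_cat: "preadditive C \<Longrightarrow> category C"
  unfolding preadditive_def by auto

lemma preadd_ab:
  assumes "preadditive C" "a \<in> cat_obj C" "b \<in> cat_obj C"
  shows "cat_zero C a b \<in> hom C a b \<and>
        (\<forall>f \<in> hom C a b. \<forall>g \<in> hom C a b. cat_add C f g \<in> hom C a b) \<and>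
        (\<forall>f \<in> hom C a b. cat_neg C f \<in> hom C a b) \<and>
        (\<forall>f \<in> hom C a b. \<forall>g \<in> hom C a b. \<forall>h \<in> hom C a b.
            cat_add C (cat_add C f g) h = cat_add C f (cat_add C g h)) \<and>
        (\<forall>f \<in> hom C a b. \<forall>g \<in> hom C a b. cat_add C f g = cat_add C g f) \<and>
        (\<forall>f \<in> hom C a b. cat_add C f (cat_zero C a b) = f) \<and>
        (\<forall>f \<in> hom C a b. cat_add C f (cat_neg C f) = cat_zero C a b)"
proof -
  have H: "\<forall>a \<in> cat_obj C. \<forall>b \<in> cat_obj C.
        cat_zero C a b \<in> hom C a b \<and>
        (\<forall>f \<in> hom C a b. \<forall>g \<in> hom C a b. cat_add C f g \<in> hom C a b) \<and>
        (\<forall>f \<in> hom C a b. cat_neg C f \<in> hom C a b) \<and>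
        (\<forall>f \<in> hom C a b. \<forall>g \<in> hom C a b. \<forall>h \<in> hom C a b.
            cat_add C (cat_add C f g) h = cat_add C f (cat_add C g h)) \<and>
        (\<forall>f \<in> hom C a b. \<forall>g \<in> hom C a b. cat_add C f g = cat_add C g f) \<and>
        (\<forall>f \<in> hom C a b. cat_add C f (cat_zero C a b) = f) \<and>
        (\<forall>f \<in> hom C a b. cat_add C f (cat_neg C f) = cat_zero C a b)"
    using assms(1) unfolding preadditive_def by (elim conjE)
  show ?thesis using H assms(2,3) by (elim ballE) auto
qed

lemma zero_idem_cancel:
  assumes P: "preadditive C" and ab: "a \<in> cat_obj C" "b \<in> cat_obj C"
    and w: "w \<in> hom C a b" and ww: "cat_add C w w = w"
  shows "w = cat_zero C a b"
proof -
  from P ab have ax: "cat_zero C a b \<in> hom C a b"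
     "\<forall>f \<in> hom C a b. \<forall>g \<in> hom C a b. \<forall>h \<in> hom C a b.
            cat_add C (cat_add C f g) h = cat_add C f (cat_add C g h)"
     "\<forall>f \<in> hom C a b. cat_add C f (cat_zero C a b) = f"
     "\<forall>f \<in> hom C a b. cat_add C f (cat_neg C f) = cat_zero C a b"
     "\<forall>f \<in> hom C a b. cat_neg C f \<in> hom C a b"
    using preadd_ab[OF P ab] by auto
  have "w = cat_add C w (cat_zero C a b)" using ax w by simp
  also have "\<dots> = cat_add C w (cat_add C w (cat_neg C w))" using ax w by simp
  also have "\<dots> = cat_add C (cat_add C w w) (cat_neg C w)" using ax w by simp
  also have "\<dots> = cat_zero C a b" using ww ax w by simp
  finally show ?thesis .
qed

lemma zero_comp:
  assumes P: "preadditive C" and f: "f \<in> hom C a b" and c: "c \<in> cat_obj C"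
  shows "cat_comp C (cat_zero C b c) f = cat_zero C a c"
proof -
  have cat: "category C" using P by (rule pre_cat)
  have ab: "a \<in> cat_obj C" "b \<in> cat_obj C" using cat_obj_of_hom[OF cat f] by auto
  have z: "cat_zero C b c \<in> hom C b c" "cat_add C (cat_zero C b c) (cat_zero C b c) = cat_zero C b c"
    using preadd_ab[OF P ab(2) c] by auto
  have "cat_comp C (cat_add C (cat_zero C b c) (cat_zero C b c)) f
      = cat_add C (cat_comp C (cat_zero C b c) f) (cat_comp C (cat_zero C b c) f)"
    using P z f unfolding preadditive_def by blast
  then have "cat_add C (cat_comp C (cat_zero C b c) f) (cat_comp C (cat_zero C b c) f) = cat_comp C (cat_zero C b c) f"
    using z by simp
  then show ?thesis using zero_idem_cancel[OF P ab(1) c] cat_comp_hom[OF cat f z(1)] by blast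
qed

lemma comp_zero:
  assumes P: "preadditive C" and f: "f \<in> hom C b c" and a: "a \<in> cat_obj C"
  shows "cat_comp C f (cat_zero C a b) = cat_zero C a c"
proof -
  have cat: "category C" using P by (rule pre_cat)
  have bc: "b \<in> cat_obj C" "c \<in> cat_obj C" using cat_obj_of_hom[OF cat f] by auto
  have z: "cat_zero C a b \<in> hom C a b" "cat_add C (cat_zero C a b) (cat_zero C a b) = cat_zero C a b"
    using preadd_ab[OF P a bc(1)] by auto
  have "cat_comp C f (cat_add C (cat_zero C a b) (cat_zero C a b))
      = cat_add C (cat_comp C f (cat_zero C a b)) (cat_comp C f (cat_zero C a b))"
    using P z f unfolding preadditive_def by blast
  then have "cat_add C (cat_comp C f (cat_zero C a b)) (cat_comp C f (cat_zero C a b)) = cat_comp C f (cat_zero C a b)"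
    using z by simp
  then show ?thesis using zero_idem_cancel[OF P a bc(2)] cat_comp_hom[OF cat z(1) f] by blast
qed

lemma End_ring_ring:
  assumes P: "preadditive C" and M: "M \<in> cat_obj C"
  shows "ring (End_ring C M)"
proof -
  have cat: "category C" using P by (rule pre_cat)
  have ax: "cat_zero C M M \<in> hom C M M"
        "(\<forall>f \<in> hom C M M. \<forall>g \<in> hom C M M. cat_add C f g \<in> hom C M M)"
        "(\<forall>f \<in> hom C M M. cat_neg C f \<in> hom C M M)"
        "(\<forall>f \<in> hom C M M. \<forall>g \<in> hom C M M. \<forall>h \<in> hom C M M.
            cat_add C (cat_add C f g) h = cat_add C f (cat_add C g h))"
        "(\<forall>f \<in> hom C M M. \<forall>g \<in> hom C M M. cat_add C f g = cat_add C g f)"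
        "(\<forall>f \<in> hom C M M. cat_add C f (cat_zero C M M) = f)"
        "(\<forall>f \<in> hom C M M. cat_add C f (cat_neg C f) = cat_zero C M M)"
    using preadd_ab[OF P M M] by auto
  have dl: "\<And>f g h. f \<in> hom C M M \<Longrightarrow> g \<in> hom C M M \<Longrightarrow> h \<in> hom C M M \<Longrightarrow>
        cat_comp C h (cat_add C f g) = cat_add C (cat_comp C h f) (cat_comp C h g)"
   and dr: "\<And>f g h. f \<in> hom C M M \<Longrightarrow> g \<in> hom C M M \<Longrightarrow> h \<in> hom C M M \<Longrightarrow>
        cat_comp C (cat_add C f g) h = cat_add C (cat_comp C f h) (cat_comp C g h)"
    using P unfolding preadditive_def by blast+
  show ?thesis
  proof (rule ringI)
    show "abelian_group (End_ring C M)"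
      apply (rule abelian_groupI)
      using ax apply (simp_all add: End_ring_def)
       apply metis
      done
    show "monoid (End_ring C M)"
      apply (rule monoidI)
      using cat M by (auto simp: End_ring_def intro: cat_comp_hom cat_id_hom cat_id_l cat_id_r
          cat_assoc[symmetric])
  qed (auto simp: End_ring_def intro: dl dr)
qed


lemma (in ring) abelian_crit:
  assumes H: "\<And>f g x. f \<in> carrier R \<Longrightarrow> g \<in> carrier R \<Longrightarrow> x \<in> carrier R \<Longrightarrow>
                 f \<otimes> g = \<zero> \<Longrightarrow> f \<otimes> (x \<otimes> g) = \<zero>"
  shows "abelian_ring R"
  unfolding abelian_ring_def
proof (intro ballI impI)
  fix e x assume e: "e \<in> carrier R" and ee: "e \<otimes> e = e" and x: "x \<in> carrier R"
  have ne: "\<one> \<ominus> e \<in> carrier R" using e by simp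
  have z1: "(\<one> \<ominus> e) \<otimes> e = \<zero>" using e ee by (simp add: minus_eq l_distr l_minus r_neg)
  have z2: "e \<otimes> (\<one> \<ominus> e) = \<zero>" using e ee by (simp add: minus_eq r_distr r_minus r_neg)
  have a1: "(\<one> \<ominus> e) \<otimes> (x \<otimes> e) = \<zero>" using H[OF ne e x z1] .
  have a2: "e \<otimes> (x \<otimes> (\<one> \<ominus> e)) = \<zero>" using H[OF e ne x z2] .
  have b1: "x \<otimes> e \<ominus> e \<otimes> (x \<otimes> e) = \<zero>" using a1 e x by (simp add: minus_eq l_distr l_minus)
  have b2: "e \<otimes> x \<ominus> e \<otimes> x \<otimes> e = \<zero>" using a2 e x by (simp add: minus_eq r_distr r_minus m_assoc)
  have eq: "\<And>a b. a \<in> carrier R \<Longrightarrow> b \<in> carrier R \<Longrightarrow> a \<ominus> b = \<zero> \<Longrightarrow> a = b"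
  proof -
    fix a b assume ab: "a \<in> carrier R" "b \<in> carrier R" "a \<ominus> b = \<zero>"
    have "a = (a \<ominus> b) \<oplus> b" using ab(1,2) by (simp add: minus_eq a_assoc l_neg)
    then show "a = b" using ab by simp
  qed
  have c1: "x \<otimes> e = e \<otimes> (x \<otimes> e)" using eq[OF _ _ b1] e x by simp
  have c2: "e \<otimes> x = e \<otimes> x \<otimes> e" using eq[OF _ _ b2] e x by simp
  show "e \<otimes> x = x \<otimes> e" using c1 c2 e x by (simp add: m_assoc)
qed

lemma key_ker:
  assumes A: "abelian_category C" and M: "M \<in> cat_obj C" and S: "strongly_self_rickart C M"
    and f: "f \<in> hom C M M" and g: "g \<in> hom C M M" and x: "x \<in> hom C M M"
    and fg: "cat_comp C f g = cat_zero C M M"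
  shows "cat_comp C f (cat_comp C x g) = cat_zero C M M"
proof -
  have P: "preadditive C" using A unfolding abelian_category_def additive_category_def by auto
  have cat: "category C" using P by (rule pre_cat)
  have "\<exists>k. is_kernel C f k" using A hom_arr[OF f] unfolding abelian_category_def by auto
  then obtain k where k: "is_kernel C f k" by blast
  define K where "K = cat_dom C k"
  have kh: "k \<in> hom C K M" using k hom_arr[OF f] unfolding is_kernel_def K_def hom_def by auto
  have fk: "cat_comp C f k = cat_zero C K M" using k hom_arr[OF f] unfolding is_kernel_def K_def by auto
  have "\<exists>!u. u \<in> hom C M K \<and> cat_comp C k u = g"
    using k g fg hom_arr[OF f] unfolding is_kernel_def K_def by auto
  then obtain u where u: "u \<in> hom C M K" and ku: "cat_comp C k u = g" by blast
  have fi: "fully_invariant C k" using S f k unfolding strongly_self_rickart_def by blast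
  then obtain \<alpha> where al: "\<alpha> \<in> hom C K K" and xk: "cat_comp C x k = cat_comp C k \<alpha>"
    using x hom_arr[OF kh] unfolding fully_invariant_def K_def by auto
  have K: "K \<in> cat_obj C" using cat_obj_of_hom[OF cat kh] by simp
  have au: "cat_comp C \<alpha> u \<in> hom C M K" using cat_comp_hom[OF cat u al] .
  have "cat_comp C f (cat_comp C x g) = cat_comp C f (cat_comp C (cat_comp C x k) u)"
    using ku cat_assoc[OF cat u kh x] by simp
  also have "\<dots> = cat_comp C f (cat_comp C k (cat_comp C \<alpha> u))"
    using xk cat_assoc[OF cat u al kh] by simp
  also have "\<dots> = cat_comp C (cat_comp C f k) (cat_comp C \<alpha> u)"
    using cat_assoc[OF cat au kh f] .
  also have "\<dots> = cat_zero C M M" using fk zero_comp[OF P au M] by simp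
  finally show ?thesis .
qed

lemma key_coker:
  assumes A: "abelian_category C" and M: "M \<in> cat_obj C" and S: "dual_strongly_self_rickart C M"
    and f: "f \<in> hom C M M" and g: "g \<in> hom C M M" and x: "x \<in> hom C M M"
    and fg: "cat_comp C f g = cat_zero C M M"
  shows "cat_comp C f (cat_comp C x g) = cat_zero C M M"
proof -
  have P: "preadditive C" using A unfolding abelian_category_def additive_category_def by auto
  have cat: "category C" using P by (rule pre_cat)
  have "\<exists>c. is_cokernel C g c" using A hom_arr[OF g] unfolding abelian_category_def by auto
  then obtain c where c: "is_cokernel C g c" by blast
  define Q where "Q = cat_cod C c"
  have ch: "c \<in> hom C M Q" using c hom_arr[OF g] unfolding is_cokernel_def Q_def hom_def by auto
  have cg: "cat_comp C c g = cat_zero C M Q" using c hom_arr[OF g] unfolding is_cokernel_def Q_def by auto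
  have "\<exists>!u. u \<in> hom C Q M \<and> cat_comp C u c = f"
    using c f fg hom_arr[OF g] unfolding is_cokernel_def Q_def by auto
  then obtain u where u: "u \<in> hom C Q M" and uc: "cat_comp C u c = f" by blast
  have fi: "fully_coinvariant C c" using S g c unfolding dual_strongly_self_rickart_def by blast
  then obtain \<gamma> where ga: "\<gamma> \<in> hom C Q Q" and cx: "cat_comp C c x = cat_comp C \<gamma> c"
    using x hom_arr[OF ch] unfolding fully_coinvariant_def Q_def by auto
  have Q: "Q \<in> cat_obj C" using cat_obj_of_hom[OF cat ch] by simp
  have xg: "cat_comp C x g \<in> hom C M M" using cat_comp_hom[OF cat g x] .
  have "cat_comp C f (cat_comp C x g) = cat_comp C u (cat_comp C c (cat_comp C x g))"
    using uc cat_assoc[OF cat xg ch u] by simp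
  also have "\<dots> = cat_comp C u (cat_comp C (cat_comp C \<gamma> c) g)"
    using cat_assoc[OF cat g x ch] cx by simp
  also have "\<dots> = cat_comp C u (cat_comp C \<gamma> (cat_zero C M Q))"
    using cat_assoc[OF cat g ch ga] cg by simp
  also have "\<dots> = cat_zero C M M" using comp_zero[OF P ga M] comp_zero[OF P u M] by simp
  finally show ?thesis .
qed

lemma strong_of_abelian:
  assumes A: "abelian_category C" and M: "M \<in> cat_obj C" and S: "self_rickart C M"
    and Ab: "abelian_ring (End_ring C M)"
  shows "strongly_self_rickart C M"
  unfolding strongly_self_rickart_def
proof (intro ballI allI impI conjI)
  have P: "preadditive C" using A unfolding abelian_category_def additive_category_def by auto
  have cat: "category C" using P by (rule pre_cat)
  fix h k assume h: "h \<in> hom C M M" and k: "is_kernel C h k"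
  show sec: "section C k" using S h k unfolding self_rickart_def by blast
  define K where "K = cat_dom C k"
  have kh: "k \<in> hom C K M" using k hom_arr[OF h] unfolding is_kernel_def K_def hom_def by auto
  obtain k' where k': "k' \<in> hom C M K" and kk: "cat_comp C k' k = cat_id C K"
    using sec hom_arr[OF kh] unfolding section_def by auto
  have K: "K \<in> cat_obj C" using cat_obj_of_hom[OF cat kh] by simp
  have e: "cat_comp C k k' \<in> hom C M M" using cat_comp_hom[OF cat k' kh] .
  have "cat_comp C (cat_comp C k k') (cat_comp C k k') = cat_comp C k (cat_comp C (cat_comp C k' k) k')"
    using cat_assoc[OF cat k' kh k'] cat_assoc[OF cat e k' kh] by simp
  then have ee: "cat_comp C (cat_comp C k k') (cat_comp C k k') = cat_comp C k k'"
    using kk cat_id_l[OF cat k'] by simp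
  have central: "\<And>x. x \<in> hom C M M \<Longrightarrow> cat_comp C (cat_comp C k k') x = cat_comp C x (cat_comp C k k')"
    using Ab e ee unfolding abelian_ring_def End_ring_def by auto
  show "fully_invariant C k"
    unfolding fully_invariant_def
  proof (intro conjI ballI)
    show "mono C k" unfolding mono_def
    proof (intro conjI allI impI)
      show "k \<in> cat_arr C" using hom_arr[OF kh] by simp
      fix X g1 g2 assume g1: "g1 \<in> hom C X (cat_dom C k)" and g2: "g2 \<in> hom C X (cat_dom C k)"
        and eq: "cat_comp C k g1 = cat_comp C k g2"
      have g1': "g1 \<in> hom C X K" and g2': "g2 \<in> hom C X K" using g1 g2 K_def by auto
      have "g1 = cat_comp C (cat_comp C k' k) g1" using kk cat_id_l[OF cat g1'] by simp
      also have "\<dots> = cat_comp C k' (cat_comp C k g2)" using cat_assoc[OF cat g1' kh k'] eq by simp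
      also have "\<dots> = g2" using cat_assoc[OF cat g2' kh k'] kk cat_id_l[OF cat g2'] by simp
      finally show "g1 = g2" .
    qed
    fix x assume x0: "x \<in> hom C (cat_cod C k) (cat_cod C k)"
    have x: "x \<in> hom C M M" using x0 hom_arr[OF kh] by simp
    have xk: "cat_comp C x k \<in> hom C K M" using cat_comp_hom[OF cat kh x] .
    have al: "cat_comp C k' (cat_comp C x k) \<in> hom C K K" using cat_comp_hom[OF cat xk k'] .
    have "cat_comp C k (cat_comp C k' (cat_comp C x k)) = cat_comp C (cat_comp C (cat_comp C k k') x) k"
      using cat_assoc[OF cat xk k' kh] cat_assoc[OF cat kh x e] by simp
    also have "\<dots> = cat_comp C x (cat_comp C k (cat_comp C k' k))"
      using central[OF x] cat_assoc[OF cat kh e x] cat_assoc[OF cat kh k' kh] by simp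
    also have "\<dots> = cat_comp C x k" using kk cat_id_r[OF cat kh] by simp
    finally show "\<exists>\<alpha>\<in>hom C (cat_dom C k) (cat_dom C k). cat_comp C x k = cat_comp C k \<alpha>"
      using al K_def by metis
  qed
qed

lemma dual_strong_of_abelian:
  assumes A: "abelian_category C" and M: "M \<in> cat_obj C" and S: "dual_self_rickart C M"
    and Ab: "abelian_ring (End_ring C M)"
  shows "dual_strongly_self_rickart C M"
  unfolding dual_strongly_self_rickart_def
proof (intro ballI allI impI conjI)
  have P: "preadditive C" using A unfolding abelian_category_def additive_category_def by auto
  have cat: "category C" using P by (rule pre_cat)
  fix h c assume h: "h \<in> hom C M M" and c: "is_cokernel C h c"
  show ret: "retraction C c" using S h c unfolding dual_self_rickart_def by blast
  define Q where "Q = cat_cod C c"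
  have ch: "c \<in> hom C M Q" using c hom_arr[OF h] unfolding is_cokernel_def Q_def hom_def by auto
  obtain c' where c': "c' \<in> hom C Q M" and cc: "cat_comp C c c' = cat_id C Q"
    using ret hom_arr[OF ch] unfolding retraction_def by auto
  have Q: "Q \<in> cat_obj C" using cat_obj_of_hom[OF cat ch] by simp
  have e: "cat_comp C c' c \<in> hom C M M" using cat_comp_hom[OF cat ch c'] .
  have "cat_comp C (cat_comp C c' c) (cat_comp C c' c) = cat_comp C c' (cat_comp C (cat_comp C c c') c)"
    using cat_assoc[OF cat ch c' ch] cat_assoc[OF cat e ch c'] by simp
  then have ee: "cat_comp C (cat_comp C c' c) (cat_comp C c' c) = cat_comp C c' c"
    using cc cat_id_l[OF cat ch] by simp
  have central: "\<And>x. x \<in> hom C M M \<Longrightarrow> cat_comp C (cat_comp C c' c) x = cat_comp C x (cat_comp C c' c)"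
    using Ab e ee unfolding abelian_ring_def End_ring_def by auto
  show "fully_coinvariant C c"
    unfolding fully_coinvariant_def
  proof (intro conjI ballI)
    show "epi C c" unfolding epi_def
    proof (intro conjI allI impI)
      show "c \<in> cat_arr C" using hom_arr[OF ch] by simp
      fix X g1 g2 assume g1: "g1 \<in> hom C (cat_cod C c) X" and g2: "g2 \<in> hom C (cat_cod C c) X"
        and eq: "cat_comp C g1 c = cat_comp C g2 c"
      have g1': "g1 \<in> hom C Q X" and g2': "g2 \<in> hom C Q X" using g1 g2 Q_def by auto
      have "g1 = cat_comp C g1 (cat_comp C c c')" using cc cat_id_r[OF cat g1'] by simp
      also have "\<dots> = cat_comp C (cat_comp C g2 c) c'" using cat_assoc[OF cat c' ch g1'] eq by simp
      also have "\<dots> = g2" using cat_assoc[OF cat c' ch g2'] cc cat_id_r[OF cat g2'] by simp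
      finally show "g1 = g2" .
    qed
    fix x assume x0: "x \<in> hom C (cat_dom C c) (cat_dom C c)"
    have x: "x \<in> hom C M M" using x0 hom_arr[OF ch] by simp
    have xc: "cat_comp C x c' \<in> hom C Q M" using cat_comp_hom[OF cat c' x] .
    have ga: "cat_comp C c (cat_comp C x c') \<in> hom C Q Q" using cat_comp_hom[OF cat xc ch] .
    have "cat_comp C (cat_comp C c (cat_comp C x c')) c = cat_comp C c (cat_comp C x (cat_comp C c' c))"
      using cat_assoc[OF cat ch xc ch] cat_assoc[OF cat ch c' x] by simp
    also have "\<dots> = cat_comp C (cat_comp C (cat_comp C c c') c) x"
      using central[OF x] cat_assoc[OF cat x e ch] cat_assoc[OF cat ch c' ch] by simp
    also have "\<dots> = cat_comp C c x" using cc cat_id_l[OF cat ch] by simp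
    finally show "\<exists>\<gamma>\<in>hom C (cat_cod C c) (cat_cod C c). cat_comp C c x = cat_comp C \<gamma> c"
      using ga Q_def by metis
  qed
qed

theorem proposition2p14:
  fixes C :: "('o, 'm) cat" and M :: 'o
  assumes "abelian_category C" and "M \<in> cat_obj C"
  shows "(strongly_self_rickart C M \<longleftrightarrow> self_rickart C M \<and> abelian_ring (End_ring C M)) \<and>
         (dual_strongly_self_rickart C M \<longleftrightarrow> dual_self_rickart C M \<and> abelian_ring (End_ring C M))"
proof -
  have P: "preadditive C" using assms(1) unfolding abelian_category_def additive_category_def by auto
  interpret R: ring "End_ring C M" using End_ring_ring[OF P assms(2)] .
  have s1: "strongly_self_rickart C M \<Longrightarrow> abelian_ring (End_ring C M)"
    by (rule R.abelian_crit) (auto simp: End_ring_def intro: key_ker[OF assms])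
  have s2: "dual_strongly_self_rickart C M \<Longrightarrow> abelian_ring (End_ring C M)"
    by (rule R.abelian_crit) (auto simp: End_ring_def intro: key_coker[OF assms])
  have t1: "strongly_self_rickart C M \<Longrightarrow> self_rickart C M"
    unfolding strongly_self_rickart_def self_rickart_def by blast
  have t2: "dual_strongly_self_rickart C M \<Longrightarrow> dual_self_rickart C M"
    unfolding dual_strongly_self_rickart_def dual_self_rickart_def by blast
  show ?thesis using s1 s2 t1 t2 strong_of_abelian[OF assms] dual_strong_of_abelian[OF assms] by blast
qed

end
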